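(* Let $r\in(0,1]$ and let $(\psi(k))_{k\in\mathbb{N}}$ be a positive nonincreasing sequence for which there exists $\varepsilon>0$ such that the sequence $k^{r+\varepsilon}\psi(k)$ is almost decreasing. Then there is a constant $K$, depending on $\psi$ and $r$, such that for all $n\in\mathbb{N}$ $$\psi(n)\,n^{r}\le\sum_{k=n}^{\infty}\Delta\psi(k)\,k^{r}\le K\,\psi(n)\,n^{r}.$$
   Context: $\Delta\psi(k)=\psi(k)-\psi(k+1)$. A sequence $(a_k)$ is almost decreasing if there is a constant $K_1>0$ such that $a_{k_1}\le K_1 a_{k_2}$ for all $k_1>k_2\ge1$. *)

theory Defs
  imports "HOL-Analysis.Analysis"
begin

definition Delta :: "(nat \<Rightarrow> real) \<Rightarrow> nat \<Rightarrow> real" where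
  "Delta \<psi> k = \<psi> k - \<psi> (Suc k)"

definition almost_decreasing :: "(nat \<Rightarrow> real) \<Rightarrow> bool" where
  "almost_decreasing a \<longleftrightarrow> (\<exists>K1>0. \<forall>k1 k2. k1 > k2 \<and> k2 \<ge> 1 \<longrightarrow> a k1 \<le> K1 * a k2)"

end

theory Submission
  imports Defs
begin

lemma L1:
  fixes m r :: real
  assumes "1 < m" "0 < r" "r \<le> 1"
  shows "m powr r - (m - 1) powr r \<le> m powr (r - 1)"
proof -
  define x where "x = (m - 1) / m"
  have x0: "0 \<le> x" "x \<le> 1" using assms by (auto simp: x_def)
  have "x powr 1 \<le> x powr r" using powr_mono'[OF assms(3) x0] .
  hence xx: "x \<le> x powr r" using x0 by simp
  have "m - 1 = x * m" using assms by (simp add: x_def)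
  hence "(m - 1) powr r = x powr r * m powr r" using x0 assms by (simp add: powr_mult)
  also have "\<dots> \<ge> x * m powr r" using xx assms by (intro mult_right_mono) auto
  finally have "(m - 1) powr r \<ge> x * m powr r" .
  moreover have "x * m powr r = m powr r - m powr (r - 1)"
    using assms by (simp add: x_def powr_diff field_simps)
  ultimately show ?thesis by linarith
qed

lemma L2:
  fixes m e :: real
  assumes "1 < m" "0 < e"
  shows "e * m powr (-1 - e) \<le> (m - 1) powr (-e) - m powr (-e)"
proof -
  have lnb: "ln ((m - 1) / m) \<le> (m - 1) / m - 1" using assms by (intro ln_le_minus_one) auto
  have "ln ((m - 1) / m) = ln (m - 1) - ln m" using assms by (simp add: ln_div)
  moreover have "(m - 1) / m - 1 = - (1 / m)" using assms by (simp add: field_simps)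
  ultimately have h: "1 / m \<le> ln m - ln (m - 1)" using lnb by linarith
  have y: "e / m \<le> e * (ln m - ln (m - 1))"
    using mult_left_mono[OF h, of e] assms by simp
  have "1 + e * (ln m - ln (m - 1)) \<le> exp (e * (ln m - ln (m - 1)))"
    by (rule exp_ge_add_one_self)
  hence ex: "1 + e / m \<le> exp (e * (ln m - ln (m - 1)))" using y by linarith
  have mp: "m powr (-e) > 0" using assms by simp
  have "(m - 1) powr (-e) = m powr (-e) * exp (e * (ln m - ln (m - 1)))"
    using assms by (simp add: powr_def exp_add[symmetric] algebra_simps)
  moreover have "m powr (-1 - e) = m powr (-e) * (e / m) / e"
    using assms by (simp add: powr_diff powr_minus field_simps)
  moreover have "m powr (-e) * (1 + e / m) \<le> m powr (-e) * exp (e * (ln m - ln (m - 1)))"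
    using ex mp by (intro mult_left_mono) auto
  ultimately show ?thesis using assms by (simp add: algebra_simps)
qed

theorem lemma1:
  fixes \<psi> :: "nat \<Rightarrow> real" and r :: real
  assumes r: "0 < r" "r \<le> 1"
    and pos: "\<And>k. k \<ge> 1 \<Longrightarrow> \<psi> k > 0"
    and noninc: "\<And>k. k \<ge> 1 \<Longrightarrow> \<psi> (Suc k) \<le> \<psi> k"
    and ad: "\<exists>\<epsilon>>0. almost_decreasing (\<lambda>k. real k powr (r + \<epsilon>) * \<psi> k)"
  shows "\<exists>K. \<forall>n\<ge>1. summable (\<lambda>i. Delta \<psi> (n + i) * real (n + i) powr r)
            \<and> \<psi> n * real n powr r \<le> (\<Sum>i. Delta \<psi> (n + i) * real (n + i) powr r)
            \<and> (\<Sum>i. Delta \<psi> (n + i) * real (n + i) powr r) \<le> K * \<psi> n * real n powr r"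
proof -
  obtain e K1 where e: "e > 0" and K1: "K1 > 0"
    and AD: "\<And>k1 k2. k1 > k2 \<Longrightarrow> k2 \<ge> 1 \<Longrightarrow>
       real k1 powr (r + e) * \<psi> k1 \<le> K1 * (real k2 powr (r + e) * \<psi> k2)"
    using ad unfolding almost_decreasing_def by blast
  define C where "C = K1 / e"
  have C0: "C > 0" using K1 e by (simp add: C_def)
  have Dnn: "Delta \<psi> k \<ge> 0" if "k \<ge> 1" for k using noninc[OF that] by (simp add: Delta_def)
  have lim0: "\<psi> \<longlonglongrightarrow> 0"
  proof (rule tendsto_sandwich[of "\<lambda>_. 0" _ _ "\<lambda>k. K1 * \<psi> 1 * real k powr (-(r+e))"])
    show "\<forall>\<^sub>F k in sequentially. 0 \<le> \<psi> k"
      using eventually_ge_at_top[of 1] by eventually_elim (use pos in force)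
    show "\<forall>\<^sub>F k in sequentially. \<psi> k \<le> K1 * \<psi> 1 * real k powr (-(r+e))"
      using eventually_ge_at_top[of 2]
    proof eventually_elim
      case (elim k)
      have kp: "real k powr (r + e) > 0" using elim by simp
      have "real k powr (r + e) * \<psi> k \<le> K1 * \<psi> 1" using AD[of 1 k] elim by simp
      hence "\<psi> k \<le> K1 * \<psi> 1 / real k powr (r + e)" using kp by (simp add: field_simps)
      thus ?case by (subst powr_minus) (simp add: divide_inverse)
    qed
    have "(\<lambda>k. real k powr (-(r+e))) \<longlonglongrightarrow> 0"
      using r e by (intro tendsto_neg_powr filterlim_real_sequentially) auto
    thus "(\<lambda>k. K1 * \<psi> 1 * real k powr (-(r+e))) \<longlonglongrightarrow> 0"
      using tendsto_mult_right_zero by blast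
  qed auto
  show ?thesis
  proof (rule exI[of _ "1 + C"], intro allI impI)
    fix n :: nat assume n: "n \<ge> 1"
    define a where "a i = Delta \<psi> (n + i) * real (n + i) powr r" for i
    have a0: "a i \<ge> 0" for i unfolding a_def using Dnn[of "n+i"] n by simp
    have np: "real n powr r > 0" "real n powr (r+e) > 0" "real n powr (-e) > 0" using n by auto
    have upper: "sum a {..<N} + \<psi> (n + N) * real (n + N) powr r \<le>
        \<psi> n * real n powr r + C * \<psi> n * real n powr (r + e) *
          (real n powr (-e) - real (n + N) powr (-e))" for N
    proof (induction N)
      case 0 thus ?case by simp
    next
      case (Suc N)
      define m where "m = real (n + N + 1)"
      have m1: "m > 1" using n by (simp add: m_def)
      have mm: "m - 1 = real (n + N)" by (simp add: m_def)
      have psm: "\<psi> (Suc (n + N)) > 0" using pos[of "Suc (n+N)"] by simp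
      have step: "\<psi> (Suc (n + N)) * (m powr r - (m - 1) powr r) \<le>
          C * \<psi> n * real n powr (r + e) * ((m - 1) powr (-e) - m powr (-e))"
      proof -
        have "\<psi> (Suc (n + N)) * (m powr r - (m - 1) powr r) \<le> \<psi> (Suc (n + N)) * m powr (r - 1)"
          using L1[OF m1 r] psm by (intro mult_left_mono) auto
        also have "\<dots> = (m powr (r + e) * \<psi> (Suc (n + N))) * m powr (-1 - e)"
          using m1 by (simp add: powr_add[symmetric])
        also have "\<dots> \<le> (K1 * (real n powr (r + e) * \<psi> n)) * m powr (-1 - e)"
          using AD[of n "Suc (n+N)"] n by (intro mult_right_mono) (auto simp: m_def add.commute)
        also have "\<dots> = C * \<psi> n * real n powr (r + e) * (e * m powr (-1 - e))"
          using e by (simp add: C_def)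
        also have "\<dots> \<le> C * \<psi> n * real n powr (r + e) * ((m - 1) powr (-e) - m powr (-e))"
          using L2[OF m1 e] C0 pos[OF n] np by (intro mult_left_mono) auto
        finally show ?thesis .
      qed
      have "sum a {..<Suc N} + \<psi> (n + Suc N) * real (n + Suc N) powr r =
          (sum a {..<N} + \<psi> (n + N) * real (n + N) powr r)
          + \<psi> (Suc (n + N)) * (m powr r - (m - 1) powr r)"
        by (simp add: a_def Delta_def m_def algebra_simps)
      also have "\<dots> \<le> \<psi> n * real n powr r + C * \<psi> n * real n powr (r + e) *
          (real n powr (-e) - real (n + N) powr (-e))
          + C * \<psi> n * real n powr (r + e) * ((m - 1) powr (-e) - m powr (-e))"
        using Suc.IH step by linarith
      also have "\<dots> = \<psi> n * real n powr r + C * \<psi> n * real n powr (r + e) *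
          (real n powr (-e) - real (n + Suc N) powr (-e))"
        by (simp add: mm m_def algebra_simps)
      finally show ?case .
    qed
    have bnd: "sum a {..<N} \<le> (1 + C) * \<psi> n * real n powr r" for N
    proof -
      have "\<psi> (n + N) * real (n + N) powr r \<ge> 0" using pos[of "n+N"] n by simp
      moreover have "C * \<psi> n * real n powr (r + e) * (real n powr (-e) - real (n + N) powr (-e))
          \<le> C * \<psi> n * real n powr (r + e) * real n powr (-e)"
        using C0 pos[OF n] np by (intro mult_left_mono) auto
      moreover have "real n powr (r + e) * real n powr (-e) = real n powr r"
        using n by (simp add: powr_add[symmetric])
      ultimately show ?thesis using upper[of N] by (simp add: algebra_simps)
    qed
    have sa: "summable a" using summableI_nonneg_bounded[OF a0 bnd] .
    have lower: "sum a {..<N} \<ge> real n powr r * (\<psi> n - \<psi> (n + N))" for N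
    proof (induction N)
      case 0 thus ?case by simp
    next
      case (Suc N)
      have "real n powr r \<le> real (n + N) powr r" using n r by (intro powr_mono2) auto
      hence "Delta \<psi> (n + N) * real n powr r \<le> a N"
        unfolding a_def using Dnn[of "n+N"] n by (intro mult_left_mono) auto
      thus ?case using Suc.IH by (simp add: Delta_def algebra_simps)
    qed
    have "(\<lambda>N. real n powr r * (\<psi> n - \<psi> (N + n))) \<longlonglongrightarrow> real n powr r * (\<psi> n - 0)"
      using LIMSEQ_ignore_initial_segment[OF lim0, of n] by (intro tendsto_intros)
    hence "real n powr r * \<psi> n \<le> suminf a"
      using summable_LIMSEQ[OF sa] lower by (intro LIMSEQ_le) (auto simp: add.commute)
    moreover have "suminf a \<le> (1 + C) * \<psi> n * real n powr r"
      using suminf_le_const[OF sa bnd] .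
    ultimately show "summable (\<lambda>i. Delta \<psi> (n + i) * real (n + i) powr r)
            \<and> \<psi> n * real n powr r \<le> (\<Sum>i. Delta \<psi> (n + i) * real (n + i) powr r)
            \<and> (\<Sum>i. Delta \<psi> (n + i) * real (n + i) powr r) \<le> (1 + C) * \<psi> n * real n powr r"
      using sa unfolding a_def by (simp add: mult.commute)
  qed
qed

end
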